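(* Let $c$ be an even integer greater than one and $\Gamma=\langle 2,c+1\rangle$ (the numerical semigroup generated by $2$ and $c+1$). For $m\in\Gamma$, \[ \delta^2_\Gamma(m)=\begin{cases}3 & \text{if } m=2,\\ 4 & \text{if } 2<m\le c+1.\end{cases} \]
   Context: For a numerical semigroup $\Gamma$: $D_\Gamma(x)=\{s\in\Gamma:x-s\in\Gamma\}$ and $\delta^2_\Gamma(m)=\min\{|D_\Gamma(m_1)\cup D_\Gamma(m_2)|: m\le m_1<m_2,\ m_1,m_2\in\Gamma\}$. *)

theory Defs
  imports Main
begin

definition semigroup2 :: "nat \<Rightarrow> nat \<Rightarrow> nat set" where
  "semigroup2 a b = {a * i + b * j | i j. True}"

text \<open>D_S(x) = {s in S. x - s in S} (with x - s taken in the integers, so s \<le> x).\<close>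
definition Dset :: "nat set \<Rightarrow> nat \<Rightarrow> nat set" where
  "Dset S x = {s \<in> S. s \<le> x \<and> x - s \<in> S}"

definition delta2 :: "nat set \<Rightarrow> nat \<Rightarrow> nat" where
  "delta2 S m = Inf {card (Dset S m1 \<union> Dset S m2) | m1 m2.
      m \<le> m1 \<and> m1 < m2 \<and> m1 \<in> S \<and> m2 \<in> S}"

end

theory Submission
  imports Defs
begin

lemma memS:
  assumes "odd b"
  shows "x \<in> semigroup2 2 b \<longleftrightarrow> even x \<or> b \<le> x"
proof
  assume "x \<in> semigroup2 2 b"
  then obtain i j where x: "x = 2*i + b*j" unfolding semigroup2_def by auto
  show "even x \<or> b \<le> x"
  proof (cases j)
    case 0 then show ?thesis using x by auto
  next
    case (Suc k) then have "b \<le> b*j" by simp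
    then show ?thesis using x by linarith
  qed
next
  assume h: "even x \<or> b \<le> x"
  show "x \<in> semigroup2 2 b"
  proof (cases "even x")
    case True
    then have "x = 2*(x div 2) + b*0" by simp
    then show ?thesis unfolding semigroup2_def by blast
  next
    case False
    then have "b \<le> x" using h by auto
    with False assms have "even (x - b)" by auto
    then have "x = 2*((x-b) div 2) + b*1" using \<open>b \<le> x\<close> by simp
    then show ?thesis unfolding semigroup2_def by blast
  qed
qed

lemma zeroS: "0 \<in> semigroup2 a b"
  unfolding semigroup2_def by (rule CollectI, rule exI[of _ 0], rule exI[of _ 0]) simp

lemma Dfin: "finite (Dset S x)"
  by (rule finite_subset[of _ "{0..x}"]) (auto simp: Dset_def)

lemma Dbase: "x \<in> S \<Longrightarrow> 0 \<in> S \<Longrightarrow> {0, x} \<subseteq> Dset S x"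
  by (auto simp: Dset_def)

lemma card3: "card {a,b,c::nat} \<le> 3"
  using card_length[of "[a,b,c]"] by simp

lemma card4: "card {a,b,c,d::nat} \<le> 4"
  using card_length[of "[a,b,c,d]"] by simp

lemma ar1: "odd (m1::nat) \<Longrightarrow> odd m2 \<Longrightarrow> m1 < m2 \<Longrightarrow> m1 + 2 \<le> m2" by presburger
lemma ar2: "even (c::nat) \<Longrightarrow> 1 < c \<Longrightarrow> s \<le> 4 \<Longrightarrow> (even s \<or> c+1 \<le> s) \<Longrightarrow> (even (4-s) \<or> c+1 \<le> 4-s) \<or> (even (2-s) \<or> c+1 \<le> 2-s) \<Longrightarrow> s \<le> 2 \<or> (even (4-s) \<or> c+1 \<le> 4-s) \<Longrightarrow> s \<in> {0,2,4}" 
  by (cases "s = 0 \<or> s = 1 \<or> s = 2 \<or> s = 3 \<or> s = 4") auto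
lemma ar3: "even (c::nat) \<Longrightarrow> 1 < c \<Longrightarrow> s \<notin> {0,2,c+1,c+3} \<Longrightarrow> s \<le> c+3 \<Longrightarrow> (even s \<or> c+1 \<le> s) \<Longrightarrow> (even (c+3-s) \<or> c+1 \<le> c+3-s) \<Longrightarrow> False" 
  by auto presburger
lemma ar4: "even (c::nat) \<Longrightarrow> 1 < c \<Longrightarrow> s \<notin> {0,2,c+1,c+3} \<Longrightarrow> s \<le> c+1 \<Longrightarrow> (even s \<or> c+1 \<le> s) \<Longrightarrow> (even (c+1-s) \<or> c+1 \<le> c+1-s) \<Longrightarrow> False" 
  by auto

theorem lemma4p6:
  fixes c m :: nat
  assumes "even c" and "c > 1" and "m \<in> semigroup2 2 (c + 1)"
  shows "(m = 2 \<longrightarrow> delta2 (semigroup2 2 (c + 1)) m = 3)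
       \<and> (2 < m \<and> m \<le> c + 1 \<longrightarrow> delta2 (semigroup2 2 (c + 1)) m = 4)"
proof -
  let ?S = "semigroup2 2 (c + 1)"
  have ob: "odd (c+1)" using assms(1) by simp
  have mem: "\<And>x. x \<in> ?S \<longleftrightarrow> even x \<or> c + 1 \<le> x" using memS[OF ob] .
  have z: "0 \<in> ?S" by (rule zeroS)
  have lb3: "3 \<le> card (Dset ?S m1 \<union> Dset ?S m2)"
    if "m1 < m2" "m1 \<in> ?S" "m2 \<in> ?S" "0 < m1" for m1 m2
  proof -
    have "{0, m1, m2} \<subseteq> Dset ?S m1 \<union> Dset ?S m2"
      using Dbase[OF that(2) z] Dbase[OF that(3) z] by auto
    then have "card {0, m1, m2} \<le> card (Dset ?S m1 \<union> Dset ?S m2)"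
      by (intro card_mono) (auto simp: Dfin)
    moreover have "card {0, m1, m2} = 3" using that by auto
    ultimately show ?thesis by simp
  qed
  have lb4: "4 \<le> card (Dset ?S m1 \<union> Dset ?S m2)"
    if "m1 < m2" "m1 \<in> ?S" "m2 \<in> ?S" "2 < m1" for m1 m2
  proof -
    have two: "2 \<in> Dset ?S m1 \<union> Dset ?S m2"
    proof (cases "even m1")
      case True then show ?thesis using that unfolding Dset_def mem by auto
    next
      case False
      then have m1: "c + 1 \<le> m1" using that mem by auto
      show ?thesis
      proof (cases "even m2")
        case True then show ?thesis using that unfolding Dset_def mem by auto
      next
        case False
        with \<open>odd m1\<close> that have "m1 + 2 \<le> m2"
          using ar1 by blast
        then have "c + 1 \<le> m2 - 2" "odd (m2 - 2)" using m1 False that by auto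
        then show ?thesis unfolding Dset_def mem by auto
      qed
    qed
    have "{0, 2, m1, m2} \<subseteq> Dset ?S m1 \<union> Dset ?S m2"
      using Dbase[OF that(2) z] Dbase[OF that(3) z] two by auto
    then have "card {0, 2, m1, m2} \<le> card (Dset ?S m1 \<union> Dset ?S m2)"
      by (intro card_mono) (auto simp: Dfin)
    moreover have "card {0, 2, m1, m2} = 4" using that by auto
    ultimately show ?thesis by simp
  qed
  show ?thesis
  proof (intro conjI impI)
    assume m: "m = 2"
    have s2: "2 \<in> ?S" "4 \<in> ?S" using mem by auto
    have "Dset ?S 2 \<union> Dset ?S 4 \<subseteq> {0, 2, 4}"
    proof
      fix s assume "s \<in> Dset ?S 2 \<union> Dset ?S 4"
      then have "s \<le> 4" "s \<in> ?S" "4 - s \<in> ?S \<or> 2 - s \<in> ?S" "s \<le> 2 \<or> 4 - s \<in> ?S"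
        unfolding Dset_def by auto
      then show "s \<in> {0, 2, 4}" unfolding mem using assms(1,2) ar2 by blast
    qed
    then have "card (Dset ?S 2 \<union> Dset ?S 4) \<le> 3"
      using card_mono[of "{0,2,4::nat}"] card3[of 0 2 4] by (meson finite.emptyI finite.insertI le_trans)
    with lb3[of 2 4] s2 have eq: "card (Dset ?S 2 \<union> Dset ?S 4) = 3" by auto
    show "delta2 ?S m = 3" unfolding delta2_def
    proof (rule cInf_eq_minimum)
      show "3 \<in> {card (Dset ?S m1 \<union> Dset ?S m2) | m1 m2. m \<le> m1 \<and> m1 < m2 \<and> m1 \<in> ?S \<and> m2 \<in> ?S}"
        using eq s2 m by (intro CollectI exI[of _ 2] exI[of _ 4]) auto
    next
      fix y assume "y \<in> {card (Dset ?S m1 \<union> Dset ?S m2) | m1 m2. m \<le> m1 \<and> m1 < m2 \<and> m1 \<in> ?S \<and> m2 \<in> ?S}"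
      then show "3 \<le> y" using lb3 m by force
    qed
  next
    assume m: "2 < m \<and> m \<le> c + 1"
    have s2: "c+1 \<in> ?S" "c+3 \<in> ?S" using mem by auto
    have "Dset ?S (c+1) \<union> Dset ?S (c+3) \<subseteq> {0, 2, c+1, c+3}"
    proof
      fix s assume s: "s \<in> Dset ?S (c+1) \<union> Dset ?S (c+3)"
      show "s \<in> {0, 2, c+1, c+3}"
      proof (rule ccontr)
        assume ns: "s \<notin> {0, 2, c+1, c+3}"
        from s consider "s \<le> c+1" "s \<in> ?S" "c+1-s \<in> ?S" | "s \<le> c+3" "s \<in> ?S" "c+3-s \<in> ?S"
          unfolding Dset_def by auto
        then show False
        proof cases
          case 1 then show False using ns ar4[OF assms(1,2) ns] unfolding mem by blast
        next
          case 2 then show False using ns ar3[OF assms(1,2) ns] unfolding mem by blast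
        qed
      qed
    qed
    then have "card (Dset ?S (c+1) \<union> Dset ?S (c+3)) \<le> 4"
      using card_mono[of "{0,2,c+1,c+3::nat}"] card4[of 0 2 "c+1" "c+3"] by (meson finite.emptyI finite.insertI le_trans)
    with lb4[of "c+1" "c+3"] s2 assms(2) have eq: "card (Dset ?S (c+1) \<union> Dset ?S (c+3)) = 4" by auto
    show "delta2 ?S m = 4" unfolding delta2_def
    proof (rule cInf_eq_minimum)
      show "4 \<in> {card (Dset ?S m1 \<union> Dset ?S m2) | m1 m2. m \<le> m1 \<and> m1 < m2 \<and> m1 \<in> ?S \<and> m2 \<in> ?S}"
        using eq s2 m by (intro CollectI exI[of _ "c+1"] exI[of _ "c+3"]) auto
    next
      fix y assume "y \<in> {card (Dset ?S m1 \<union> Dset ?S m2) | m1 m2. m \<le> m1 \<and> m1 < m2 \<and> m1 \<in> ?S \<and> m2 \<in> ?S}"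
      then show "4 \<le> y" using lb4 m by force
    qed
  qed
qed

end
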